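(* Let $M=(S,\mathrm{Act},P)$ be an MDP and $T\subseteq S$. Let $(x,r)\in[0,1]^S\times\mathbb{N}_\infty^S$ satisfy: (1) $D^{\max}(r)\le r$; (2) $x\le B^{\min}(x)$; (3) for all $s\in S\setminus T$, $x(s)>0$ implies $r(s)<\infty$ (all inequalities between functions pointwise). Then $\Pr^{\min}_s(\Diamond T)\ge x(s)$ for all $s\in S$.
   Context: An MDP is a tuple $M=(S,\mathrm{Act},P)$ with $S$ finite, $\mathrm{Act}$ finite, $P\colon S\times\mathrm{Act}\times S\to[0,1]$ with $\sum_{s'}P(s,a,s')\in\{0,1\}$; $\mathrm{Act}(s)=\{a\mid\sum_{s'}P(s,a,s')=1\}$ is nonempty for all $s$; $\mathrm{Post}(s,a)=\{s'\mid P(s,a,s')>0\}$. A strategy is $\sigma\colon S\to\mathrm{Act}$ with $\sigma(s)\in\mathrm{Act}(s)$, inducing a Markov chain with transitions $P(s,\sigma(s),\cdot)$; $\Pr^\sigma_s(\Diamond T)$ is the probability of visiting $T$ from $s$ and $\Pr^{\min}_s(\Diamond T)=\min_\sigma\Pr^\sigma_s(\Diamond T)$. $\mathbb{N}_\infty=\mathbb{N}\cup\{\infty\}$, $1+\infty=\infty$. $D^{\max}(r)(s)=0$ for $s\in T$ and $1+\max_{a\in\mathrm{Act}(s)}\min_{s'\in\mathrm{Post}(s,a)}r(s')$ for $s\notin T$. $B^{\min}(x)(s)=1$ for $s\in T$ and $\min_{a\in\mathrm{Act}(s)}\sum_{s'\in\mathrm{Post}(s,a)}P(s,a,s')x(s')$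 for $s\notin T$. *)

theory Defs
  imports Complex_Main "HOL-Library.Extended_Nat"
begin

definition is_mdp :: "('s::finite \<Rightarrow> 'a::finite \<Rightarrow> 's \<Rightarrow> real) \<Rightarrow> bool" where
  "is_mdp P \<longleftrightarrow>
     (\<forall>s a t. 0 \<le> P s a t \<and> P s a t \<le> 1) \<and>
     (\<forall>s a. (\<Sum>t\<in>UNIV. P s a t) \<in> {0, 1}) \<and>
     (\<forall>s. \<exists>a. (\<Sum>t\<in>UNIV. P s a t) = 1)"

definition Act :: "('s::finite \<Rightarrow> 'a::finite \<Rightarrow> 's \<Rightarrow> real) \<Rightarrow> 's \<Rightarrow> 'a set" where
  "Act P s = {a. (\<Sum>t\<in>UNIV. P s a t) = 1}"

definition Post :: "('s::finite \<Rightarrow> 'a::finite \<Rightarrow> 's \<Rightarrow> real) \<Rightarrow> 's \<Rightarrow> 'a \<Rightarrow> 's set" where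
  "Post P s a = {t. P s a t > 0}"

definition strategies :: "('s::finite \<Rightarrow> 'a::finite \<Rightarrow> 's \<Rightarrow> real) \<Rightarrow> ('s \<Rightarrow> 'a) set" where
  "strategies P = {\<sigma>. \<forall>s. \<sigma> s \<in> Act P s}"

fun reach_within :: "('s::finite \<Rightarrow> 'a::finite \<Rightarrow> 's \<Rightarrow> real) \<Rightarrow> ('s \<Rightarrow> 'a) \<Rightarrow> 's set \<Rightarrow> nat \<Rightarrow> 's \<Rightarrow> real" where
  "reach_within P \<sigma> T 0 s = (if s \<in> T then 1 else 0)"
| "reach_within P \<sigma> T (Suc n) s =
     (if s \<in> T then 1 else (\<Sum>t\<in>UNIV. P s (\<sigma> s) t * reach_within P \<sigma> T n t))"

(* Pr^\<sigma>_s(\<Diamond>T): the limit (= supremum) of the step-bounded reachability probabilities *)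
definition Pr_reach :: "('s::finite \<Rightarrow> 'a::finite \<Rightarrow> 's \<Rightarrow> real) \<Rightarrow> ('s \<Rightarrow> 'a) \<Rightarrow> 's \<Rightarrow> 's set \<Rightarrow> real" where
  "Pr_reach P \<sigma> s T = (SUP n. reach_within P \<sigma> T n s)"

definition Pr_min_reach :: "('s::finite \<Rightarrow> 'a::finite \<Rightarrow> 's \<Rightarrow> real) \<Rightarrow> 's \<Rightarrow> 's set \<Rightarrow> real" where
  "Pr_min_reach P s T = Min ((\<lambda>\<sigma>. Pr_reach P \<sigma> s T) ` strategies P)"

definition Dmax :: "('s::finite \<Rightarrow> 'a::finite \<Rightarrow> 's \<Rightarrow> real) \<Rightarrow> 's set \<Rightarrow> ('s \<Rightarrow> enat) \<Rightarrow> 's \<Rightarrow> enat" where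
  "Dmax P T r s = (if s \<in> T then 0
     else 1 + Max ((\<lambda>a. Min (r ` Post P s a)) ` Act P s))"

definition Bmin :: "('s::finite \<Rightarrow> 'a::finite \<Rightarrow> 's \<Rightarrow> real) \<Rightarrow> 's set \<Rightarrow> ('s \<Rightarrow> real) \<Rightarrow> 's \<Rightarrow> real" where
  "Bmin P T x s = (if s \<in> T then 1
     else Min ((\<lambda>a. \<Sum>t\<in>Post P s a. P s a t * x t) ` Act P s))"

end

theory Submission
  imports Defs
begin

lemma sumP1:
  assumes "\<sigma> \<in> strategies P"
  shows "(\<Sum>t\<in>UNIV. P s (\<sigma> s) t) = 1"
  using assms unfolding strategies_def Act_def by auto

lemma Pnn: "is_mdp P \<Longrightarrow> 0 \<le> P s a t"
  unfolding is_mdp_def by auto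

lemma rw_bounds:
  assumes "is_mdp P" "\<sigma> \<in> strategies P"
  shows "0 \<le> reach_within P \<sigma> T n s \<and> reach_within P \<sigma> T n s \<le> 1"
proof (induction n arbitrary: s)
  case 0
  then show ?case by simp
next
  case (Suc n)
  have a: "(\<Sum>t\<in>UNIV. P s (\<sigma> s) t * reach_within P \<sigma> T n t) \<ge> 0"
    by (intro sum_nonneg mult_nonneg_nonneg) (use Suc Pnn[OF assms(1)] in auto)
  have "(\<Sum>t\<in>UNIV. P s (\<sigma> s) t * reach_within P \<sigma> T n t) \<le> (\<Sum>t\<in>UNIV. P s (\<sigma> s) t * 1)"
    by (intro sum_mono mult_left_mono) (use Suc Pnn[OF assms(1)] in auto)
  also have "\<dots> = 1" using sumP1[OF assms(2)] by simp
  finally show ?case using a by simp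
qed

lemma rw_mono:
  assumes "is_mdp P" "\<sigma> \<in> strategies P"
  shows "reach_within P \<sigma> T n s \<le> reach_within P \<sigma> T (Suc n) s"
proof (induction n arbitrary: s)
  case 0
  then show ?case using rw_bounds[OF assms, of T "Suc 0" s] by auto
next
  case (Suc n)
  have "(\<Sum>t\<in>UNIV. P s (\<sigma> s) t * reach_within P \<sigma> T n t) \<le> (\<Sum>t\<in>UNIV. P s (\<sigma> s) t * reach_within P \<sigma> T (Suc n) t)"
    by (intro sum_mono mult_left_mono) (use Suc Pnn[OF assms(1)] in auto)
  then show ?case by simp
qed

lemma rw_lim:
  assumes "is_mdp P" "\<sigma> \<in> strategies P"
  shows "(\<lambda>n. reach_within P \<sigma> T n s) \<longlonglongrightarrow> Pr_reach P \<sigma> s T"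
  unfolding Pr_reach_def
proof (rule LIMSEQ_incseq_SUP)
  show "bdd_above (range (\<lambda>n. reach_within P \<sigma> T n s))"
    using rw_bounds[OF assms] by (intro bdd_aboveI) auto
  show "incseq (\<lambda>n. reach_within P \<sigma> T n s)"
    using rw_mono[OF assms] by (intro incseq_SucI) auto
qed

lemma pr_bounds:
  assumes "is_mdp P" "\<sigma> \<in> strategies P"
  shows "0 \<le> Pr_reach P \<sigma> s T \<and> Pr_reach P \<sigma> s T \<le> 1"
proof
  show "0 \<le> Pr_reach P \<sigma> s T"
    using rw_lim[OF assms] rw_bounds[OF assms]
    by (intro LIMSEQ_le_const[where X="\<lambda>n. reach_within P \<sigma> T n s"]) auto
  show "Pr_reach P \<sigma> s T \<le> 1"
    using rw_lim[OF assms] rw_bounds[OF assms]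
    by (intro LIMSEQ_le_const2[where X="\<lambda>n. reach_within P \<sigma> T n s"]) auto
qed

lemma pr_fix:
  assumes "is_mdp P" "\<sigma> \<in> strategies P"
  shows "Pr_reach P \<sigma> s T = (if s \<in> T then 1 else (\<Sum>t\<in>UNIV. P s (\<sigma> s) t * Pr_reach P \<sigma> t T))"
proof -
  have l1: "(\<lambda>n. reach_within P \<sigma> T (Suc n) s) \<longlonglongrightarrow> Pr_reach P \<sigma> s T"
    using rw_lim[OF assms] by (rule LIMSEQ_Suc)
  have l2: "(\<lambda>n. reach_within P \<sigma> T (Suc n) s) \<longlonglongrightarrow> (if s \<in> T then 1 else (\<Sum>t\<in>UNIV. P s (\<sigma> s) t * Pr_reach P \<sigma> t T))"
  proof (cases "s \<in> T")
    case True
    then show ?thesis by simp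
  next
    case False
    have "(\<lambda>n. \<Sum>t\<in>UNIV. P s (\<sigma> s) t * reach_within P \<sigma> T n t) \<longlonglongrightarrow> (\<Sum>t\<in>UNIV. P s (\<sigma> s) t * Pr_reach P \<sigma> t T)"
      by (intro tendsto_sum tendsto_mult tendsto_const rw_lim[OF assms])
    then show ?thesis using False by simp
  qed
  show ?thesis using LIMSEQ_unique[OF l1 l2] .
qed


lemma l1: "(1::enat) + a \<le> r \<Longrightarrow> r < \<infinity> \<Longrightarrow> a < r"
  by (cases a; cases r) (auto simp: one_enat_def)
lemma l2: "(b::enat) \<le> c \<Longrightarrow> 1 + c \<le> r \<Longrightarrow> 1 + b \<le> r"
  using add_left_mono order_trans by blast
lemma l3: "finite A \<Longrightarrow> (\<forall>t. 0 \<le> (f t::real)) \<Longrightarrow> (\<Sum>t\<in>{t\<in>A. f t > 0}. f t * g t) = (\<Sum>t\<in>A. f t * g t)"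
  by (rule sum.mono_neutral_left) (auto simp: less_eq_real_def)

lemma main_strat:
  fixes P :: "'s::finite \<Rightarrow> 'a::finite \<Rightarrow> 's \<Rightarrow> real"
    and T :: "'s set" and x :: "'s \<Rightarrow> real" and r :: "'s \<Rightarrow> enat"
  assumes mdp: "is_mdp P"
    and x01: "\<forall>s. 0 \<le> x s \<and> x s \<le> 1"
    and D: "\<forall>s. Dmax P T r s \<le> r s"
    and B: "\<forall>s. x s \<le> Bmin P T x s"
    and fin: "\<forall>s. s \<notin> T \<longrightarrow> x s > 0 \<longrightarrow> r s < \<infinity>"
    and sg: "\<sigma> \<in> strategies P"
  shows "x s \<le> Pr_reach P \<sigma> s T"
proof (rule ccontr)
  assume neg: "\<not> x s \<le> Pr_reach P \<sigma> s T"
  define p where "p t = Pr_reach P \<sigma> t T" for t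
  define d where "d t = x t - p t" for t
  define m where "m = Max (range d)"
  have dm: "d t \<le> m" for t unfolding m_def by (rule Max_ge) auto
  have mpos: "m > 0" using dm[of s] neg unfolding d_def p_def by linarith
  define M where "M = {t. d t = m}"
  have "m \<in> range d" unfolding m_def by (rule Max_in) auto
  then have Mne: "M \<noteq> {}" unfolding M_def by auto
  define k where "k = Min (r ` M)"
  have "k \<in> r ` M" unfolding k_def using Mne by (intro Min_in) auto
  then obtain s0 where s0M: "s0 \<in> M" and rs0: "r s0 = k" by auto
  have kmin: "t \<in> M \<Longrightarrow> k \<le> r t" for t unfolding k_def by (rule Min_le) auto
  have ds0: "d s0 = m" using s0M M_def by auto
  have p01: "0 \<le> p t \<and> p t \<le> 1" for t unfolding p_def using pr_bounds[OF mdp sg] by auto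
  have s0T: "s0 \<notin> T"
  proof
    assume "s0 \<in> T"
    then have "p s0 = 1" unfolding p_def using pr_fix[OF mdp sg, of s0 T] by simp
    then show False using ds0 mpos x01 unfolding d_def by (metis diff_le_0_iff_le not_less)
  qed
  have "x s0 > 0" using ds0 mpos p01[of s0] unfolding d_def by linarith
  then have rfin: "r s0 < \<infinity>" using fin s0T by auto
  let ?a = "\<sigma> s0"
  have aAct: "?a \<in> Act P s0" using sg unfolding strategies_def by auto
  have "Min (r ` Post P s0 ?a) \<le> Max ((\<lambda>a. Min (r ` Post P s0 a)) ` Act P s0)"
    using aAct by (intro Max_ge) auto
  moreover have "Dmax P T r s0 = 1 + Max ((\<lambda>a. Min (r ` Post P s0 a)) ` Act P s0)"
    using s0T by (simp add: Dmax_def)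
  ultimately have "1 + Min (r ` Post P s0 ?a) \<le> r s0"
    using D[rule_format, of s0] by (metis l2)
  then have lt: "Min (r ` Post P s0 ?a) < r s0" using rfin
    by (rule l1)
  have sum1: "(\<Sum>t\<in>UNIV. P s0 ?a t) = 1" using sumP1[OF sg] by simp
  have "Post P s0 ?a \<noteq> {}"
  proof
    assume "Post P s0 ?a = {}"
    then have "\<forall>t. P s0 ?a t = 0" unfolding Post_def using Pnn[OF mdp] by (metis empty_iff less_eq_real_def mem_Collect_eq)
    then show False using sum1 by simp
  qed
  then have "Min (r ` Post P s0 ?a) \<in> r ` Post P s0 ?a" by (intro Min_in) auto
  then obtain t where tPost: "t \<in> Post P s0 ?a" and rt: "r t < r s0" using lt by auto
  have "x s0 \<le> Bmin P T x s0" using B by auto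
  also have "\<dots> \<le> (\<Sum>t\<in>Post P s0 ?a. P s0 ?a t * x t)"
    unfolding Bmin_def using s0T aAct by (auto intro: Min_le)
  also have "\<dots> = (\<Sum>t\<in>UNIV. P s0 ?a t * x t)"
    unfolding Post_def using l3[of UNIV "P s0 ?a" x] Pnn[OF mdp, of s0 ?a] by simp
  finally have xs0: "x s0 \<le> (\<Sum>t\<in>UNIV. P s0 ?a t * x t)" .
  have ps0: "p s0 = (\<Sum>t\<in>UNIV. P s0 ?a t * p t)"
    unfolding p_def using pr_fix[OF mdp sg, of s0 T] s0T by simp
  have "m \<le> (\<Sum>t\<in>UNIV. P s0 ?a t * d t)"
    using xs0 ps0 ds0 unfolding d_def by (simp add: sum_subtractf right_diff_distrib)
  then have "(\<Sum>t\<in>UNIV. P s0 ?a t * (m - d t)) \<le> 0"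
    using sum1 by (simp add: sum_subtractf right_diff_distrib flip: sum_distrib_right)
  moreover have nn: "\<forall>t\<in>UNIV. 0 \<le> P s0 ?a t * (m - d t)"
    using dm Pnn[OF mdp] by auto
  ultimately have "(\<Sum>t\<in>UNIV. P s0 ?a t * (m - d t)) = 0"
    by (meson antisym sum_nonneg)
  then have "P s0 ?a t * (m - d t) = 0" using nn by (simp add: sum_nonneg_eq_0_iff)
  then have "d t = m" using tPost unfolding Post_def by auto
  then have "t \<in> M" unfolding M_def by simp
  then show False using kmin rt rs0 by (simp add: leD)
qed

theorem proposition4:
  fixes P :: "'s::finite \<Rightarrow> 'a::finite \<Rightarrow> 's \<Rightarrow> real"
    and T :: "'s set" and x :: "'s \<Rightarrow> real" and r :: "'s \<Rightarrow> enat"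
  assumes "is_mdp P"
    and "\<forall>s. 0 \<le> x s \<and> x s \<le> 1"
    and "\<forall>s. Dmax P T r s \<le> r s"
    and "\<forall>s. x s \<le> Bmin P T x s"
    and "\<forall>s. s \<notin> T \<longrightarrow> x s > 0 \<longrightarrow> r s < \<infinity>"
  shows "\<forall>s. Pr_min_reach P s T \<ge> x s"
proof
  fix s
  have "\<forall>s. \<exists>a. a \<in> Act P s" using assms(1) unfolding is_mdp_def Act_def by auto
  then have "(\<lambda>s. SOME a. a \<in> Act P s) \<in> strategies P"
    unfolding strategies_def by (auto intro: someI_ex)
  then have ne: "strategies P \<noteq> {}" by auto
  show "Pr_min_reach P s T \<ge> x s"
    unfolding Pr_min_reach_def
    using ne main_strat[OF assms] by (subst Min_ge_iff) auto
qed

end
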